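(* Let $(S,M)$ be a surface with marked points and empty boundary, and let $T$ be an ideal triangulation of $(S,M)$ such that at each puncture $p\in M$ there are at least three arcs of $T$ incident to $p$ (an arc starting and ending at the same puncture counted twice). Let $Q$ be the adjacency quiver of $T$, with vertex set $Q_0$ and arrow set $Q_1$. Then: (a) $Q$ is connected and has no loops or $2$-cycles; (b) for every $i\in Q_0$ there are exactly two arrows starting at $i$ and exactly two arrows ending at $i$; (c) there are bijections $f,g:Q_1\to Q_1$ such that for every $\alpha\in Q_1$ the set $\{f(\alpha),g(\alpha)\}$ consists of the two arrows that start at the vertex at which $\alpha$ ends, and $f^3$ is the identity on $Q_1$.
   Context: A surface with marked points and empty boundary is a pair $(S,M)$ with $S$ a compact, connected, oriented surface without boundary and $M\subset S$ a finite non-empty set of punctures. The adjacency quiver $Q$ of $T$ has the arcs of $T$ as vertices, and for each puncture $p$ and each pair of arcs $i,j$ incident to $p$ such that $j$ immediately follows $i$ in the counterclockwise order around $p$, an arrow $i\to j$ (one arrow per such occurrence). *)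

theory Defs
  imports Main
begin

text \<open>Combinatorial model of an ideal triangulation T of a closed oriented
connected surface with punctures.  H is the finite set of sides of the
triangles of T.  sigma rotates the sides of each triangle in counterclockwise
order (every sigma-orbit has exactly 3 elements, one per triangle), iota
identifies the two sides glued to form one arc (a fixed-point-free involution,
the gluing being orientation reversing).  Side h runs from vertex start(h) to
vertex end(h) counterclockwise along its triangle.\<close>

definition ideal_triangulation :: "'h set \<Rightarrow> ('h \<Rightarrow> 'h) \<Rightarrow> ('h \<Rightarrow> 'h) \<Rightarrow> bool" where
  "ideal_triangulation H sigma iota \<longleftrightarrow>
     finite H \<and> H \<noteq> {} \<and>
     bij_betw sigma H H \<and> (\<forall>h\<in>H. sigma h \<noteq> h \<and> (sigma ^^ 3) h = h) \<and>
     (\<forall>h\<in>H. iota h \<in> H \<and> iota h \<noteq> h \<and> iota (iota h) = h) \<and>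
     (\<forall>h\<in>H. \<forall>k\<in>H. (h, k) \<in> ({(x, sigma x) | x. x \<in> H} \<union> {(x, iota x) | x. x \<in> H})\<^sup>*)"

definition arc_of :: "('h \<Rightarrow> 'h) \<Rightarrow> 'h \<Rightarrow> 'h set" where
  "arc_of iota h = {h, iota h}"

definition arcs :: "'h set \<Rightarrow> ('h \<Rightarrow> 'h) \<Rightarrow> 'h set set" where
  "arcs H iota = arc_of iota ` H"

text \<open>Corners of triangles: corner h is the angle between sides h and sigma h,
at the vertex end(h) = start(sigma h).  Rotating counterclockwise around a
puncture, corner h is followed by corner sigma^-1 (iota h) = sigma^2 (iota h).
The orbits of this rotation are the punctures; the size of an orbit is the
number of arc ends at the puncture (loops counted twice).\<close>
definition puncture_rot :: "('h \<Rightarrow> 'h) \<Rightarrow> ('h \<Rightarrow> 'h) \<Rightarrow> 'h \<Rightarrow> 'h" where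
  "puncture_rot sigma iota h = (sigma ^^ 2) (iota h)"

definition corners_at_puncture :: "('h \<Rightarrow> 'h) \<Rightarrow> ('h \<Rightarrow> 'h) \<Rightarrow> 'h \<Rightarrow> 'h set" where
  "corners_at_puncture sigma iota h = {(puncture_rot sigma iota ^^ n) h | n. True}"

text \<open>Adjacency quiver: vertices are the arcs, arrows are the corners (one
arrow per occurrence of two consecutive arcs around a puncture).  At corner h
the arc of sigma h is immediately followed, counterclockwise, by the arc of h,
giving an arrow arc(sigma h) -> arc(h).\<close>
definition adj_src :: "('h \<Rightarrow> 'h) \<Rightarrow> ('h \<Rightarrow> 'h) \<Rightarrow> 'h \<Rightarrow> 'h set" where
  "adj_src sigma iota h = arc_of iota (sigma h)"

definition adj_tgt :: "('h \<Rightarrow> 'h) \<Rightarrow> ('h \<Rightarrow> 'h) \<Rightarrow> 'h \<Rightarrow> 'h set" where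
  "adj_tgt sigma iota h = arc_of iota h"

definition quiver_connected :: "'v set \<Rightarrow> 'e set \<Rightarrow> ('e \<Rightarrow> 'v) \<Rightarrow> ('e \<Rightarrow> 'v) \<Rightarrow> bool" where
  "quiver_connected V E s t \<longleftrightarrow> V \<noteq> {} \<and>
     (\<forall>i\<in>V. \<forall>j\<in>V. (i, j) \<in> ({(s a, t a) | a. a \<in> E} \<union> {(t a, s a) | a. a \<in> E})\<^sup>*)"

definition quiver_no_loops :: "'e set \<Rightarrow> ('e \<Rightarrow> 'v) \<Rightarrow> ('e \<Rightarrow> 'v) \<Rightarrow> bool" where
  "quiver_no_loops E s t \<longleftrightarrow> (\<forall>a\<in>E. s a \<noteq> t a)"

definition quiver_no_2cycles :: "'e set \<Rightarrow> ('e \<Rightarrow> 'v) \<Rightarrow> ('e \<Rightarrow> 'v) \<Rightarrow> bool" where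
  "quiver_no_2cycles E s t \<longleftrightarrow> \<not> (\<exists>a\<in>E. \<exists>b\<in>E. s a = t b \<and> t a = s b \<and> s a \<noteq> t a)"

end

theory Submission
  imports Defs
begin

lemma orbit2_aux: "f (f a) = a \<Longrightarrow> (f^^n) a \<in> {a, f a}"
  by (induction n) auto

lemma card_small:
  assumes "f (f a) = a"
  shows "card {(f ^^ n) a | n. True} \<le> 2"
proof -
  have "{(f ^^ n) a | n. True} \<subseteq> {a, f a}" using orbit2_aux[of f a, OF assms] by blast
  hence "card {(f ^^ n) a | n. True} \<le> card {a, f a}" by (intro card_mono) auto
  also have "\<dots> \<le> 2" by (simp add: card_insert_if)
  finally show ?thesis .
qed

theorem proposition2p2:
  fixes H :: "'h set" and sigma iota :: "'h \<Rightarrow> 'h"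
  assumes T: "ideal_triangulation H sigma iota"
    and val: "\<forall>h\<in>H. card (corners_at_puncture sigma iota h) \<ge> 3"
  defines "Q0 \<equiv> arcs H iota" and "Q1 \<equiv> H"
    and "s \<equiv> adj_src sigma iota" and "t \<equiv> adj_tgt sigma iota"
  shows "(quiver_connected Q0 Q1 s t \<and> quiver_no_loops Q1 s t \<and> quiver_no_2cycles Q1 s t) \<and>
    (\<forall>i\<in>Q0. card {a\<in>Q1. s a = i} = 2 \<and> card {a\<in>Q1. t a = i} = 2) \<and>
    (\<exists>f g. bij_betw f Q1 Q1 \<and> bij_betw g Q1 Q1 \<and>
           (\<forall>a\<in>Q1. {f a, g a} = {b\<in>Q1. s b = t a}) \<and>
           (\<forall>a\<in>Q1. (f ^^ 3) a = a))"
proof -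
  let ?rot = "puncture_rot sigma iota"
  have fin: "finite H" and ne: "H \<noteq> {}" and bs: "bij_betw sigma H H"
    and s3: "\<And>h. h \<in> H \<Longrightarrow> sigma (sigma (sigma h)) = h"
    and sne: "\<And>h. h \<in> H \<Longrightarrow> sigma h \<noteq> h"
    and iH: "\<And>h. h \<in> H \<Longrightarrow> iota h \<in> H"
    and ine: "\<And>h. h \<in> H \<Longrightarrow> iota h \<noteq> h"
    and ii: "\<And>h. h \<in> H \<Longrightarrow> iota (iota h) = h"
    and conn: "\<forall>h\<in>H. \<forall>k\<in>H. (h, k) \<in> ({(x, sigma x) | x. x \<in> H} \<union> {(x, iota x) | x. x \<in> H})\<^sup>*"
    using T unfolding ideal_triangulation_def by (auto simp: numeral_3_eq_3)
  have sH: "\<And>h. h \<in> H \<Longrightarrow> sigma h \<in> H" using bs by (auto simp: bij_betw_def)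
  have rH: "\<And>h. h \<in> H \<Longrightarrow> ?rot h \<in> H"
    by (simp add: puncture_rot_def numeral_2_eq_2 sH iH)
  have rot_eq: "\<And>h. ?rot h = sigma (sigma (iota h))"
    by (simp add: puncture_rot_def numeral_2_eq_2)
  have no1: "\<And>h. h \<in> H \<Longrightarrow> ?rot h \<noteq> h"
  proof
    fix h assume h: "h \<in> H" and e: "?rot h = h"
    have "corners_at_puncture sigma iota h \<subseteq> {h}"
      unfolding corners_at_puncture_def using orbit2_aux[of ?rot h] e by auto
    hence "card (corners_at_puncture sigma iota h) \<le> 1"
      using card_mono[of "{h}"] by fastforce
    with val h show False by fastforce
  qed
  have no2: "\<And>h. h \<in> H \<Longrightarrow> ?rot (?rot h) \<noteq> h"
  proof
    fix h assume h: "h \<in> H" and e: "?rot (?rot h) = h"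
    have "card (corners_at_puncture sigma iota h) \<le> 2"
      unfolding corners_at_puncture_def using card_small[of ?rot h] e by simp
    with val h show False by fastforce
  qed
  have E1: "\<And>h. h \<in> H \<Longrightarrow> sigma h \<noteq> iota h"
  proof
    fix h assume h: "h \<in> H" and e: "sigma h = iota h"
    have "?rot h = h" using e s3[OF h] by (simp add: rot_eq)
    with no1 h show False by blast
  qed
  have arc_eq: "\<And>x h. x \<in> H \<Longrightarrow> h \<in> H \<Longrightarrow> arc_of iota x = arc_of iota h \<longleftrightarrow> (x = h \<or> x = iota h)"
    unfolding arc_of_def using ii by (auto simp: doubleton_eq_iff)
  have A1: "quiver_connected Q0 Q1 s t"
    unfolding quiver_connected_def
  proof (intro conjI ballI)
    show "Q0 \<noteq> {}" using ne by (simp add: Q0_def arcs_def)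
  next
    fix i j assume i: "i \<in> Q0" and j: "j \<in> Q0"
    then obtain h k where h: "h \<in> H" "i = arc_of iota h" and k: "k \<in> H" "j = arc_of iota k"
      by (auto simp: Q0_def arcs_def)
    let ?R = "{(x, sigma x) | x. x \<in> H} \<union> {(x, iota x) | x. x \<in> H}"
    let ?R' = "{(s a, t a) | a. a \<in> Q1} \<union> {(t a, s a) | a. a \<in> Q1}"
    have hk: "(h, k) \<in> ?R\<^sup>*" using conn h k by blast
    have "(arc_of iota h, arc_of iota k) \<in> ?R'\<^sup>*"
      using hk
    proof (induction rule: rtrancl_induct)
      case base then show ?case by simp
    next
      case (step y z)
      from step.hyps(2) obtain x where x: "x \<in> H" "(y = x \<and> z = sigma x) \<or> (y = x \<and> z = iota x)"
        by blast
      have "(arc_of iota y, arc_of iota z) \<in> ?R'\<^sup>*"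
      proof (cases "z = sigma x")
        case True
        have "(t x, s x) \<in> ?R'" using x(1) by (auto simp: Q1_def)
        thus ?thesis using True x by (auto simp: s_def t_def adj_src_def adj_tgt_def)
      next
        case False
        hence "y = x" "z = iota x" using x by auto
        hence "arc_of iota y = arc_of iota z" using ii[OF x(1)] by (auto simp: arc_of_def)
        thus ?thesis by simp
      qed
      with step.IH show ?case by (rule rtrancl_trans)
    qed
    thus "(i, j) \<in> ?R'\<^sup>*" using h k by simp
  qed
  have A2: "quiver_no_loops Q1 s t"
    unfolding quiver_no_loops_def
  proof
    fix a assume a: "a \<in> Q1"
    hence aH: "a \<in> H" by (simp add: Q1_def)
    show "s a \<noteq> t a"
      using arc_eq[OF sH[OF aH] aH] sne[OF aH] E1[OF aH]
      by (auto simp: s_def t_def adj_src_def adj_tgt_def)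
  qed
  have A3: "quiver_no_2cycles Q1 s t"
    unfolding quiver_no_2cycles_def
  proof
    assume "\<exists>a\<in>Q1. \<exists>b\<in>Q1. s a = t b \<and> t a = s b \<and> s a \<noteq> t a"
    then obtain a b where aH: "a \<in> H" and bH: "b \<in> H" and e1: "arc_of iota (sigma a) = arc_of iota b"
      and e2: "arc_of iota (sigma b) = arc_of iota a"
      by (auto simp: Q1_def s_def t_def adj_src_def adj_tgt_def)
    have c1: "sigma a = b \<or> sigma a = iota b" using arc_eq[OF sH[OF aH] bH] e1 by simp
    have c2: "sigma b = a \<or> sigma b = iota a" using arc_eq[OF sH[OF bH] aH] e2 by simp
    show False
    proof (cases "sigma a = b")
      case T1: True
      show False
      proof (cases "sigma b = a")
        case True
        hence "sigma (sigma a) = a" using T1 by simp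
        hence "sigma a = a" using s3[OF aH] by metis
        thus False using sne aH by blast
      next
        case False
        hence e: "sigma (sigma a) = iota a" using c2 T1 by simp
        let ?c = "sigma (sigma a)"
        have cH: "?c \<in> H" using sH aH by blast
        have "sigma ?c = a" using s3 aH by blast
        moreover have "iota ?c = a" using e ii aH by simp
        ultimately show False using E1[OF cH] by simp
      qed
    next
      case F1: False
      hence bb: "b = iota (sigma a)" using c1 ii[OF bH] by metis
      show False
      proof (cases "sigma b = a")
        case True
        hence e: "sigma (iota (sigma a)) = a" using bb by simp
        have saH: "sigma a \<in> H" using sH aH by blast
        have "?rot (sigma a) = sigma (sigma (iota (sigma a)))" by (simp add: rot_eq)
        also have "\<dots> = sigma a" using e by simp
        finally show False using no1[OF saH] by blast
      next
        case False
        hence e: "sigma (iota (sigma a)) = iota a" using c2 bb by simp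
        have isaH: "iota (sigma a) \<in> H" using sH iH aH by blast
        have r1: "?rot a = iota (sigma a)"
          using e s3[OF isaH] by (simp add: rot_eq) 
        have r2: "?rot (iota (sigma a)) = a"
          using ii[OF sH[OF aH]] s3[OF aH] by (simp add: rot_eq)
        show False using no2[OF aH] r1 r2 by simp
      qed
    qed
  qed
  have B: "\<forall>i\<in>Q0. card {a\<in>Q1. s a = i} = 2 \<and> card {a\<in>Q1. t a = i} = 2"
  proof
    fix i assume "i \<in> Q0"
    then obtain h where h: "h \<in> H" and ih: "i = arc_of iota h" by (auto simp: Q0_def arcs_def)
    have ihH: "iota h \<in> H" using iH h by blast
    have "{a\<in>Q1. s a = i} = {sigma (sigma h), sigma (sigma (iota h))}"
    proof (intro set_eqI iffI)
      fix a assume "a \<in> {a\<in>Q1. s a = i}"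
      hence aH: "a \<in> H" and "arc_of iota (sigma a) = arc_of iota h"
        by (auto simp: Q1_def s_def adj_src_def ih)
      hence "sigma a = h \<or> sigma a = iota h" using arc_eq sH h by blast
      thus "a \<in> {sigma (sigma h), sigma (sigma (iota h))}" using s3[OF aH] by auto
    next
      fix a assume a: "a \<in> {sigma (sigma h), sigma (sigma (iota h))}"
      have aH: "a \<in> H" using a sH h ihH by blast
      have "sigma a = h \<or> sigma a = iota h" using a s3[OF h] s3[OF ihH] by blast
      hence "arc_of iota (sigma a) = arc_of iota h" using arc_eq[OF sH[OF aH] h] by blast
      thus "a \<in> {a\<in>Q1. s a = i}" using aH by (simp add: Q1_def s_def adj_src_def ih)
    qed
    moreover have "sigma (sigma h) \<noteq> sigma (sigma (iota h))"
    proof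
      assume "sigma (sigma h) = sigma (sigma (iota h))"
      hence "sigma (sigma (sigma h)) = sigma (sigma (sigma (iota h)))" by simp
      thus False using s3[OF h] s3[OF ihH] ine[OF h] by simp
    qed
    moreover have "{a\<in>Q1. t a = i} = {h, iota h}"
    proof (intro set_eqI iffI)
      fix a assume "a \<in> {a\<in>Q1. t a = i}"
      hence aH: "a \<in> H" and "arc_of iota a = arc_of iota h"
        by (auto simp: Q1_def t_def adj_tgt_def ih)
      thus "a \<in> {h, iota h}" using arc_eq[OF aH h] by blast
    next
      fix a assume a: "a \<in> {h, iota h}"
      hence aH: "a \<in> H" using h ihH by blast
      have "arc_of iota a = arc_of iota h" using arc_eq[OF aH h] a by blast
      thus "a \<in> {a\<in>Q1. t a = i}" using aH by (simp add: Q1_def t_def adj_tgt_def ih)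
    qed
    ultimately show "card {a\<in>Q1. s a = i} = 2 \<and> card {a\<in>Q1. t a = i} = 2"
      using ine[OF h] by simp
  qed
  let ?f = "\<lambda>a. sigma (sigma a)"
  have bs2: "bij_betw ?f H H"
    using bij_betw_trans[OF bs bs] by (simp add: comp_def)
  have bg: "bij_betw ?rot H H"
  proof -
    have bi: "bij_betw iota H H"
      by (rule bij_betw_byWitness[where f'=iota]) (auto simp: iH ii)
    have e: "?rot = (\<lambda>x. sigma (sigma (iota x)))" using rot_eq by blast
    show ?thesis using bij_betw_trans[OF bi bs2] unfolding e by (simp add: comp_def)
  qed
  have C: "\<exists>f g. bij_betw f Q1 Q1 \<and> bij_betw g Q1 Q1 \<and>
           (\<forall>a\<in>Q1. {f a, g a} = {b\<in>Q1. s b = t a}) \<and>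
           (\<forall>a\<in>Q1. (f ^^ 3) a = a)"
  proof (rule exI[of _ ?f], rule exI[of _ ?rot], intro conjI ballI)
    show "bij_betw ?f Q1 Q1" using bs2 by (simp add: Q1_def)
    show "bij_betw ?rot Q1 Q1" using bg by (simp add: Q1_def)
  next
    fix a assume "a \<in> Q1"
    hence aH: "a \<in> H" by (simp add: Q1_def)
    have iaH: "iota a \<in> H" using iH aH by blast
    show "{?f a, ?rot a} = {b\<in>Q1. s b = t a}"
    proof (intro set_eqI iffI)
      fix b assume "b \<in> {?f a, ?rot a}"
      thus "b \<in> {b\<in>Q1. s b = t a}"
        using s3[OF aH] s3[OF iaH] sH aH iaH ii[OF aH]
        by (auto simp: Q1_def s_def t_def adj_src_def adj_tgt_def arc_of_def rot_eq)
    next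
      fix b assume "b \<in> {b\<in>Q1. s b = t a}"
      hence bH: "b \<in> H" and "arc_of iota (sigma b) = arc_of iota a"
        by (auto simp: Q1_def s_def t_def adj_src_def adj_tgt_def)
      hence "sigma b = a \<or> sigma b = iota a" using arc_eq sH aH by blast
      thus "b \<in> {?f a, ?rot a}" using s3[OF bH] by (auto simp: rot_eq)
    qed
  next
    fix a assume "a \<in> Q1"
    hence aH: "a \<in> H" by (simp add: Q1_def)
    have "(?f ^^ 3) a = sigma (sigma (sigma (sigma (sigma (sigma a)))))"
      by (simp add: numeral_3_eq_3)
    also have "\<dots> = a" using s3[OF aH] s3[OF sH[OF sH[OF sH[OF aH]]]] by simp
    finally show "(?f ^^ 3) a = a" .
  qed
  show ?thesis using A1 A2 A3 B C by blast
qed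

end
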